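(* Let $\mathcal C$ be an immersed curve and $P_1,P_2,\dots,P_N$ distinct points on $\mathcal C$ listed in order along $\mathcal C$. Assume there are positive constants $A_0$ and $R_0$ such that (a) for all $j$ with $1\le j\le N-2$, $\frac{A_0}{2}\le\mathrm{Area}(\triangle P_jP_{j+1}P_{j+2})$; (b) for each $j$ with $1\le j\le N-2$ the points $P_j,P_{j+1},P_{j+2}$ lie on a circle of radius $\ge R_0$. Then $$N<2+\frac{\mathrm{Length}(\mathcal C)}{(A_0R_0)^{1/3}}.$$ *)

theory Defs
  imports "HOL-Analysis.Analysis"
begin

definition immersed_curve :: "(real \<Rightarrow> real^2) \<Rightarrow> (real \<Rightarrow> real^2) \<Rightarrow> real \<Rightarrow> real \<Rightarrow> bool" where
  "immersed_curve \<gamma> \<gamma>' a b \<longleftrightarrow> a < b \<and>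
     (\<forall>t\<in>{a..b}. (\<gamma> has_vector_derivative \<gamma>' t) (at t within {a..b}) \<and> \<gamma>' t \<noteq> 0) \<and>
     continuous_on {a..b} \<gamma>'"

definition curve_length :: "(real \<Rightarrow> real^2) \<Rightarrow> real \<Rightarrow> real \<Rightarrow> real" where
  "curve_length \<gamma>' a b = integral {a..b} (\<lambda>t. norm (\<gamma>' t))"

definition tri_area :: "real^2 \<Rightarrow> real^2 \<Rightarrow> real^2 \<Rightarrow> real" where
  "tri_area P Q R = \<bar>(Q$1 - P$1) * (R$2 - P$2) - (R$1 - P$1) * (Q$2 - P$2)\<bar> / 2"

end

theory Submission
  imports Defs
begin

lemma norm2_vec: "(norm (x::real^2))^2 = (x$1)^2 + (x$2)^2"
  by (simp add: norm_eq_sqrt_inner inner_vec_def sum_2 power2_eq_square)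

lemma dist2_vec: "(dist (x::real^2) y)^2 = (x$1 - y$1)^2 + (x$2 - y$2)^2"
  by (simp add: dist_norm norm2_vec)

lemma alg_circ: fixes x1 y1 x2 y2 x3 y3 u v r :: real
  assumes "(x1-u)^2+(y1-v)^2 = r^2" "(x2-u)^2+(y2-v)^2 = r^2" "(x3-u)^2+(y3-v)^2 = r^2"
  shows "((x1-x2)^2+(y1-y2)^2)*((x2-x3)^2+(y2-y3)^2)*((x1-x3)^2+(y1-y3)^2)
    = 4*r^2*((x2-x1)*(y3-y1)-(x3-x1)*(y2-y1))^2"
  using assms by algebra

lemma circ_area:
  fixes p q s c :: "real^2"
  assumes "dist p c = r" "dist q c = r" "dist s c = r" "r \<ge> 0"
  shows "dist p q * dist q s * dist p s = 4 * r * tri_area p q s"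
proof -
  have h1: "(p$1-c$1)^2+(p$2-c$2)^2 = r^2" using assms(1) dist2_vec[of p c] by simp
  have h2: "(q$1-c$1)^2+(q$2-c$2)^2 = r^2" using assms(2) dist2_vec[of q c] by simp
  have h3: "(s$1-c$1)^2+(s$2-c$2)^2 = r^2" using assms(3) dist2_vec[of s c] by simp
  have "(dist p q * dist q s * dist p s)^2 = (dist p q)^2 * (dist q s)^2 * (dist p s)^2"
    by (simp add: power_mult_distrib)
  also have "\<dots> = 4*r^2*((q$1-p$1)*(s$2-p$2)-(s$1-p$1)*(q$2-p$2))^2"
    unfolding dist2_vec by (rule alg_circ[OF h1 h2 h3])
  also have "\<dots> = (4 * r * tri_area p q s)^2"
    by (simp add: tri_area_def power_mult_distrib power_divide)
  finally have "(dist p q * dist q s * dist p s)^2 = (4 * r * tri_area p q s)^2" .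
  moreover have "0 \<le> 4 * r * tri_area p q s" using assms(4) by (simp add: tri_area_def)
  ultimately show ?thesis
    by (simp add: power2_eq_iff_nonneg)
qed

lemma key_ineq:
  fixes p q s c :: "real^2"
  assumes "A0 > 0" "R0 > 0" "A0 / 2 \<le> tri_area p q s"
    and "r \<ge> R0" "dist p c = r" "dist q c = r" "dist s c = r"
    and "k > 0" "k^3 = A0 * R0"
  shows "2 * k \<le> dist p q + dist q s"
proof -
  define x where "x = dist p q"
  define y where "y = dist q s"
  define z where "z = dist p s"
  have x0: "x \<ge> 0" and y0: "y \<ge> 0" and z0: "z \<ge> 0" by (simp_all add: x_def y_def z_def)
  have zxy: "z \<le> x + y" unfolding x_def y_def z_def by (rule dist_triangle)
  have "x * y * z = 4 * r * tri_area p q s"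
    unfolding x_def y_def z_def using assms by (intro circ_area) auto
  also have "\<dots> \<ge> 4 * R0 * (A0/2)"
    using assms by (intro mult_mono) auto
  finally have xyz: "x * y * z \<ge> 2 * A0 * R0" by simp
  have "x * y * z \<le> x * y * (x + y)"
    using zxy x0 y0 by (simp add: mult_left_mono)
  also have "\<dots> \<le> (x + y)^3 / 4"
  proof -
    have "0 \<le> (x - y)^2 * (x + y)" using x0 y0 by simp
    then show ?thesis by (simp add: power2_eq_square power3_eq_cube algebra_simps)
  qed
  finally have "(x+y)^3 \<ge> (2*k)^3"
    using xyz assms(9) by (simp add: power_mult_distrib)
  then have h: "(2*k)^3 \<le> (x+y)^3" .
  have "2*k \<le> x + y"
  proof -
    have "(2*k)^Suc 2 \<le> (x+y)^Suc 2" using h by simp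
    then show ?thesis using x0 y0 power_le_imp_le_base[of "2*k" 2 "x+y"] by linarith
  qed
  then show ?thesis by (simp add: x_def y_def)
qed

theorem theorem3p3:
  fixes \<gamma> \<gamma>' :: "real \<Rightarrow> real^2" and a b :: real
    and P :: "nat \<Rightarrow> real^2" and t :: "nat \<Rightarrow> real" and N :: nat and A\<^sub>0 R\<^sub>0 :: real
  assumes curve: "immersed_curve \<gamma> \<gamma>' a b"
    and on_curve: "\<forall>j\<in>{1..N}. t j \<in> {a..b} \<and> P j = \<gamma> (t j)"
    and ordered: "\<forall>i j. 1 \<le> i \<and> i < j \<and> j \<le> N \<longrightarrow> t i < t j"
    and distinct: "inj_on P {1..N}"
    and A0pos: "A\<^sub>0 > 0" and R0pos: "R\<^sub>0 > 0"
    and area: "\<forall>j. 1 \<le> j \<and> j + 2 \<le> N \<longrightarrow> A\<^sub>0 / 2 \<le> tri_area (P j) (P (j+1)) (P (j+2))"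
    and circle: "\<forall>j. 1 \<le> j \<and> j + 2 \<le> N \<longrightarrow>
        (\<exists>c r. r \<ge> R\<^sub>0 \<and> dist (P j) c = r \<and> dist (P (j+1)) c = r \<and> dist (P (j+2)) c = r)"
  shows "real N < 2 + curve_length \<gamma>' a b / (A\<^sub>0 * R\<^sub>0) powr (1/3)"
proof -
  define f where "f = (\<lambda>x. norm (\<gamma>' x))"
  define L where "L = curve_length \<gamma>' a b"
  have L_def': "L = integral {a..b} f" by (simp add: L_def f_def curve_length_def)
  have ab: "a < b" and der: "\<And>x. x \<in> {a..b} \<Longrightarrow> (\<gamma> has_vector_derivative \<gamma>' x) (at x within {a..b})"
    and cont: "continuous_on {a..b} \<gamma>'"
    using curve by (auto simp: immersed_curve_def)
  have fcont: "continuous_on {a..b} f" unfolding f_def by (intro continuous_on_norm cont)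
  have fint: "f integrable_on {s..u}" if "a \<le> s" "u \<le> b" for s u
    by (rule integrable_continuous_interval, rule continuous_on_subset[OF fcont]) (use that in auto)
  have f0: "\<And>x. 0 \<le> f x" by (simp add: f_def)
  have L0: "L \<ge> 0" unfolding L_def' by (rule integral_nonneg[OF fint]) (auto simp: f0)
  have chord: "dist (\<gamma> s) (\<gamma> u) \<le> integral {s..u} f" if "a \<le> s" "s \<le> u" "u \<le> b" for s u
  proof -
    have "(\<gamma>' has_integral (\<gamma> u - \<gamma> s)) {s..u}"
      by (rule fundamental_theorem_of_calculus[OF that(2)])
        (rule has_vector_derivative_within_subset[OF der], use that in auto)
    then have "integral {s..u} \<gamma>' = \<gamma> u - \<gamma> s" by (rule integral_unique)
    moreover have "norm (integral {s..u} \<gamma>') \<le> integral {s..u} f"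
      apply (rule integral_norm_bound_integral)
      using \<open>(\<gamma>' has_integral (\<gamma> u - \<gamma> s)) {s..u}\<close> apply blast
      using fint that apply simp
      by (simp add: f_def)
    ultimately show ?thesis by (simp add: dist_norm norm_minus_commute)
  qed
  define d where "d j = dist (P j) (P (Suc j))" for j
  have d0: "\<And>j. d j \<ge> 0" by (simp add: d_def)
  have tele: "(\<Sum>j\<in>{1..<m}. integral {t j..t (Suc j)} f) = integral {t 1..t m} f"
    if "1 \<le> m" "m \<le> N" for m
    using that
  proof (induction m)
    case 0 then show ?case by simp
  next
    case (Suc m)
    show ?case
    proof (cases "m = 0")
      case True then show ?thesis by simp
    next
      case False
      then have m1: "1 \<le> m" by simp
      have IH: "(\<Sum>j\<in>{1..<m}. integral {t j..t (Suc j)} f) = integral {t 1..t m} f"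
        using Suc m1 by simp
      have tm: "t 1 \<le> t m" using ordered[rule_format, of 1 m] Suc.prems m1 by (cases "m = 1") auto
      have tm2: "t m \<le> t (Suc m)" using ordered[rule_format, of m "Suc m"] Suc.prems m1 by auto
      have ta: "a \<le> t 1" using on_curve Suc by auto
      have tb: "t (Suc m) \<le> b" using on_curve Suc by auto
      have "(\<Sum>j\<in>{1..<Suc m}. integral {t j..t (Suc j)} f)
          = integral {t 1..t m} f + integral {t m..t (Suc m)} f"
        using IH m1 by simp
      also have "\<dots> = integral {t 1..t (Suc m)} f"
        by (rule Henstock_Kurzweil_Integration.integral_combine[OF tm tm2 fint[OF ta tb]])
      finally show ?thesis .
    qed
  qed
  have dle: "d j \<le> integral {t j..t (Suc j)} f" if "1 \<le> j" "Suc j \<le> N" for j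
  proof -
    have "t j < t (Suc j)" using ordered that by auto
    moreover have "t j \<in> {a..b}" "t (Suc j) \<in> {a..b}" "P j = \<gamma> (t j)" "P (Suc j) = \<gamma> (t (Suc j))"
      using on_curve that by auto
    ultimately show ?thesis unfolding d_def using chord[of "t j" "t (Suc j)"] by auto
  qed
  define S where "S = (\<Sum>j\<in>{1..<N}. d j)"
  have SL: "S \<le> L" if "N \<ge> 1"
  proof -
    have "S \<le> (\<Sum>j\<in>{1..<N}. integral {t j..t (Suc j)} f)"
      unfolding S_def by (rule sum_mono) (use dle in auto)
    also have "\<dots> = integral {t 1..t N} f" using tele[of N] that by simp
    also have "\<dots> \<le> L" unfolding L_def'
      apply (rule integral_subset_le)
      using on_curve that apply force
      using on_curve that apply (intro fint) apply force apply force
      using fint apply simp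
      using f0 by simp
    finally show ?thesis .
  qed
  have d1: "d 1 > 0" if "N \<ge> 2"
  proof -
    have "P 1 \<noteq> P 2" 
    proof
      assume "P 1 = P 2"
      moreover have "(1::nat) \<in> {1..N}" "(2::nat) \<in> {1..N}" using that by auto
      ultimately have "(1::nat) = 2" using inj_onD[OF distinct] by blast
      then show False by simp
    qed
    then show ?thesis by (simp add: d_def numeral_2_eq_2)
  qed
  define k where "k = (A\<^sub>0 * R\<^sub>0) powr (1/3)"
  have k0: "k > 0" unfolding k_def using A0pos R0pos by simp
  have k3: "k^3 = A\<^sub>0 * R\<^sub>0"
  proof -
    have "k^3 = k powr (real 3)" using k0 by (simp add: powr_realpow)
    also have "\<dots> = A\<^sub>0 * R\<^sub>0" unfolding k_def using A0pos R0pos by (simp add: powr_powr)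
    finally show ?thesis .
  qed
  show ?thesis
  proof (cases "N \<ge> 3")
    case False
    then consider "N \<le> 1" | "N = 2" by linarith
    then show ?thesis
    proof cases
      case 1
      have "0 \<le> L / k" using L0 k0 by simp
      then show ?thesis using 1 by (simp add: L_def k_def)
    next
      case 2
      have "S = d 1" unfolding S_def using 2 by (simp add: numeral_2_eq_2)
      then have "0 < L" using SL d1 2 by force
      then have "0 < L / k" using k0 by simp
      then show ?thesis using 2 by (simp add: L_def k_def)
    qed
  next
    case True
    have step: "2 * k \<le> d j + d (Suc j)" if "j \<in> {1..N-2}" for j
    proof -
      from that have j: "1 \<le> j \<and> j + 2 \<le> N" by auto
      then obtain c r where cr: "r \<ge> R\<^sub>0" "dist (P j) c = r" "dist (P (j+1)) c = r" "dist (P (j+2)) c = r"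
        using circle by blast
      have "2 * k \<le> dist (P j) (P (j+1)) + dist (P (j+1)) (P (j+2))"
        by (rule key_ineq[OF A0pos R0pos _ cr k0 k3]) (use area j in auto)
      then show ?thesis by (simp add: d_def numeral_2_eq_2)
    qed
    have "real (N-2) * (2 * k) = (\<Sum>j\<in>{1..N-2}. 2 * k)" by simp
    also have "\<dots> \<le> (\<Sum>j\<in>{1..N-2}. d j + d (Suc j))" by (rule sum_mono) (rule step)
    also have "\<dots> = (\<Sum>j\<in>{1..N-2}. d j) + (\<Sum>j\<in>{1..N-2}. d (Suc j))" by (simp add: sum.distrib)
    also have "(\<Sum>j\<in>{1..N-2}. d (Suc j)) = (\<Sum>j\<in>{2..N-1}. d j)"
      using sum.shift_bounds_cl_Suc_ivl[of d 1 "N-2"] True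
      by (simp add: numeral_2_eq_2 Suc_diff_Suc)
    also have "(\<Sum>j\<in>{1..N-2}. d j) \<le> S"
      unfolding S_def by (rule sum_mono2) (use True d0 in auto)
    also have "S = d 1 + (\<Sum>j\<in>{2..N-1}. d j)"
    proof -
      have "{1..<N} = {1..N-1}" using True by auto
      then show ?thesis unfolding S_def using True
        by (simp add: sum.atLeast_Suc_atMost numeral_2_eq_2)
    qed
    finally have "real (N-2) * (2 * k) \<le> d 1 + 2 * (\<Sum>j\<in>{2..N-1}. d j)" by simp
    moreover have "d 1 + (\<Sum>j\<in>{2..N-1}. d j) \<le> L"
      using SL True \<open>S = d 1 + (\<Sum>j\<in>{2..N-1}. d j)\<close> by simp
    moreover have "d 1 > 0" using d1 True by simp
    ultimately have "real (N-2) * k < L" by linarith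
    then have "real (N-2) < L / k" using k0 by (simp add: pos_less_divide_eq)
    moreover have "real (N-2) = real N - 2" using True by simp
    ultimately show ?thesis by (simp add: L_def k_def)
  qed
qed

end
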